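(* Let $\Gamma$ be a variation of FSSP that has a solution. Then $\Gamma$ has a minimal-time solution if and only if there is a constant $c$ such that $\mathrm{mss}_\Gamma(C)\le c$ for every configuration $C$ of $\Gamma$.
   Context: Fix $k\ge1$; positions are elements of $\mathbb{Z}^k$, and with $\epsilon_0,\dots,\epsilon_{2k-1}$ the vectors $\pm e_1,\dots,\pm e_k$ in a fixed order, $\mathrm{bc}_C(p)\in\{0,1\}^{2k}$ has $i$-th entry $1$ iff $p+\epsilon_i\in C$. A variation $\Gamma$ of FSSP is specified by a set of configurations, each a finite set of positions containing the origin (the general). Firing squad model (boundary-sensitive): a finite automaton $A$ has a finite state set with quiescent state $\mathrm{Q}$, general states $\mathrm{G}_0,\dots,\mathrm{G}_{m-1}$, firing states $\mathcal F\not\ni\mathrm{Q}$, a map $\tau:\{0,1\}^{2k}\to\{0,\dots,m-1\}$ and a transition function from the current state and the $2k$ neighbour states ($\#$ where no node), with $\mathrm{Q}$ stable when all inputs lie in $\{\mathrm{Q},\#\}$. With a copy of $A$ at each position of a configuration $C$, at time $0$ the origin is in $\mathrm{G}_{\tau(\mathrm{bc}_C(\text{origin}))}$ and all other nodes in $\mathrm{Q}$; nodes update synchronously. $A$ is a solution of $\Gamma$ if for every configuration $C$ of $\Gamma$ there is a time $t_C$ such that no node is in $\mathcal F$ before $t_C$ and all nodes are in $\mathcal F$ at $t_C$; write $\mathrm{ft}(C,A)=t_C$. $\mathrm{mft}_\Gamma(C)=\min_A\mathrm{ft}(C,A)$ over all solutions $A$. A minimal-time solution is a solution $\tilde A$ with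 $\mathrm{ft}(C,\tilde A)=\mathrm{mft}_\Gamma(C)$ for every configuration $C$ (equivalently, $\mathrm{ft}(C,\tilde A)\le\mathrm{ft}(C,A)$ for all solutions $A$ and all $C$). $\mathrm{mss}_\Gamma(C)$ is the minimum number of states of a solution $A$ of $\Gamma$ with $\mathrm{ft}(C,A)=\mathrm{mft}_\Gamma(C)$. *)

theory Defs
  imports Main
begin

text \<open>Positions in Z^k are integer lists of length k. The origin is the zero list.\<close>

definition origin :: "nat \<Rightarrow> int list" where
  "origin k = replicate k 0"

definition vadd :: "int list \<Rightarrow> int list \<Rightarrow> int list" where
  "vadd p q = map2 (+) p q"

text \<open>Fixed order of the 2k unit vectors: eps i = e_i for i < k, eps i = - e_(i-k) for k <= i < 2k
  (indices of e counted from 0).\<close>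
definition eps :: "nat \<Rightarrow> nat \<Rightarrow> int list" where
  "eps k i = map (\<lambda>j. if j = i mod k then (if i < k then 1 else -1) else 0) [0..<k]"

definition bc :: "nat \<Rightarrow> int list set \<Rightarrow> int list \<Rightarrow> bool list" where
  "bc k C p = map (\<lambda>i. vadd p (eps k i) \<in> C) [0..<2*k]"

definition variation :: "nat \<Rightarrow> int list set set \<Rightarrow> bool" where
  "variation k \<Gamma> \<longleftrightarrow> (\<forall>C\<in>\<Gamma>. finite C \<and> origin k \<in> C \<and> (\<forall>p\<in>C. length p = k))"

text \<open>Firing squad automata; states are encoded as natural numbers (every finite state set
  is isomorphic to a finite set of naturals). The neighbour symbol # is None.\<close>
record fssp_aut =
  states :: "nat set"
  quiescent :: nat
  ngen :: nat
  gen :: "nat \<Rightarrow> nat"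
  firing :: "nat set"
  tau :: "bool list \<Rightarrow> nat"
  delta :: "nat \<Rightarrow> nat option list \<Rightarrow> nat"

definition aut_wf :: "nat \<Rightarrow> fssp_aut \<Rightarrow> bool" where
  "aut_wf k A \<longleftrightarrow>
     finite (states A) \<and> quiescent A \<in> states A \<and>
     (\<forall>i<ngen A. gen A i \<in> states A) \<and>
     firing A \<subseteq> states A \<and> quiescent A \<notin> firing A \<and>
     (\<forall>b. length b = 2*k \<longrightarrow> tau A b < ngen A) \<and>
     (\<forall>s\<in>states A. \<forall>ns. length ns = 2*k \<and> set ns \<subseteq> {None} \<union> Some ` states A
          \<longrightarrow> delta A s ns \<in> states A) \<and>
     (\<forall>ns. length ns = 2*k \<and> set ns \<subseteq> {None, Some (quiescent A)}
          \<longrightarrow> delta A (quiescent A) ns = quiescent A)"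

fun run :: "nat \<Rightarrow> fssp_aut \<Rightarrow> int list set \<Rightarrow> nat \<Rightarrow> int list \<Rightarrow> nat" where
  "run k A C 0 p = (if p = origin k then gen A (tau A (bc k C (origin k))) else quiescent A)"
| "run k A C (Suc t) p = delta A (run k A C t p)
     (map (\<lambda>i. if vadd p (eps k i) \<in> C then Some (run k A C t (vadd p (eps k i))) else None) [0..<2*k])"

definition fires_at :: "nat \<Rightarrow> fssp_aut \<Rightarrow> int list set \<Rightarrow> nat \<Rightarrow> bool" where
  "fires_at k A C t \<longleftrightarrow> (\<forall>p\<in>C. run k A C t p \<in> firing A) \<and>
                        (\<forall>t'<t. \<forall>p\<in>C. run k A C t' p \<notin> firing A)"

definition solution :: "nat \<Rightarrow> int list set set \<Rightarrow> fssp_aut \<Rightarrow> bool" where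
  "solution k \<Gamma> A \<longleftrightarrow> aut_wf k A \<and> (\<forall>C\<in>\<Gamma>. \<exists>t. fires_at k A C t)"

text \<open>Firing time ft(C,A) (the time t_C is unique when it exists).\<close>
definition ft :: "nat \<Rightarrow> int list set \<Rightarrow> fssp_aut \<Rightarrow> nat" where
  "ft k C A = (LEAST t. fires_at k A C t)"

definition mft :: "nat \<Rightarrow> int list set set \<Rightarrow> int list set \<Rightarrow> nat" where
  "mft k \<Gamma> C = (LEAST t. \<exists>A. solution k \<Gamma> A \<and> ft k C A = t)"

definition minimal_time_solution :: "nat \<Rightarrow> int list set set \<Rightarrow> fssp_aut \<Rightarrow> bool" where
  "minimal_time_solution k \<Gamma> A \<longleftrightarrow> solution k \<Gamma> A \<and> (\<forall>C\<in>\<Gamma>. ft k C A = mft k \<Gamma> C)"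

definition mss :: "nat \<Rightarrow> int list set set \<Rightarrow> int list set \<Rightarrow> nat" where
  "mss k \<Gamma> C = (LEAST n. \<exists>A. solution k \<Gamma> A \<and> ft k C A = mft k \<Gamma> C \<and> card (states A) = n)"

end

theory Submission
  imports Defs "HOL-Library.Countable" "HOL-Library.FuncSet"
begin

lemma length_bc[simp]: "length (bc k C p) = 2*k"
  by (simp add: bc_def)

lemma run_in_states:
  assumes wf: "aut_wf k A"
  shows "p \<in> C \<Longrightarrow> run k A C t p \<in> states A"
proof (induction t arbitrary: p)
  case 0
  have "tau A (bc k C (origin k)) < ngen A" using wf by (simp add: aut_wf_def)
  then show ?case using wf by (simp add: aut_wf_def)
next
  case (Suc t)
  let ?ns = "map (\<lambda>i. if vadd p (eps k i) \<in> C then Some (run k A C t (vadd p (eps k i))) else None) [0..<2*k]"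
  have "length ?ns = 2*k" by simp
  moreover have "set ?ns \<subseteq> {None} \<union> Some ` states A" using Suc.IH by auto
  moreover have "run k A C t p \<in> states A" using Suc by blast
  ultimately show ?case using wf unfolding aut_wf_def by simp
qed

lemma fires_at_ft:
  assumes "C \<noteq> {}" "fires_at k A C t"
  shows "ft k C A = t"
  unfolding ft_def
proof (rule Least_equality)
  show "fires_at k A C t" by fact
  fix y assume y: "fires_at k A C y"
  show "t \<le> y"
  proof (rule ccontr)
    assume "\<not> t \<le> y"
    then have "y < t" by simp
    from assms(1) obtain p where "p \<in> C" by blast
    with y assms(2) \<open>y < t\<close> show False unfolding fires_at_def by blast
  qed
qed

lemma solution_fires:
  assumes "solution k \<Gamma> A" "C \<in> \<Gamma>"
  shows "fires_at k A C (ft k C A)"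
  using assms unfolding solution_def ft_def by (meson LeastI_ex)

definition ren :: "fssp_aut \<Rightarrow> (nat \<Rightarrow> nat) \<Rightarrow> fssp_aut" where
  "ren A f = (let g = inv_into (states A) f in
     \<lparr>states = {0..<card (states A)}, quiescent = f (quiescent A), ngen = ngen A,
      gen = (\<lambda>i. f (gen A i)), firing = f ` firing A, tau = tau A,
      delta = (\<lambda>s ns. f (delta A (g s) (map (map_option g) ns)))\<rparr>)"

lemma ren_run:
  assumes wf: "aut_wf k A" and bij: "bij_betw f (states A) {0..<card (states A)}"
  shows "p \<in> C \<Longrightarrow> run k (ren A f) C t p = f (run k A C t p)"
proof (induction t arbitrary: p)
  case 0
  then show ?case by (simp add: ren_def Let_def)
next
  case (Suc t)
  let ?g = "inv_into (states A) f"
  have inj: "inj_on f (states A)" using bij bij_betw_def by blast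
  have gf: "\<And>x. x \<in> states A \<Longrightarrow> ?g (f x) = x" using inj by simp
  have 1: "?g (run k (ren A f) C t p) = run k A C t p"
    using Suc run_in_states[OF wf] gf by simp
  have 2: "map (map_option ?g) (map (\<lambda>i. if vadd p (eps k i) \<in> C then Some (run k (ren A f) C t (vadd p (eps k i))) else None) [0..<2*k])
     = map (\<lambda>i. if vadd p (eps k i) \<in> C then Some (run k A C t (vadd p (eps k i))) else None) [0..<2*k]"
    using Suc.IH run_in_states[OF wf] gf by auto
  have dr: "delta (ren A f) = (\<lambda>s ns. f (delta A (?g s) (map (map_option ?g) ns)))"
    by (simp add: ren_def Let_def)
  show ?case by (simp only: run.simps dr 1 2)
qed

lemma ren_props:
  assumes sol: "solution k \<Gamma> A"
  shows "\<exists>B. solution k \<Gamma> B \<and> states B = {0..<card (states A)} \<and> (\<forall>C. ft k C B = ft k C A)"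
proof -
  have wf: "aut_wf k A" using sol solution_def by blast
  have fin: "finite (states A)" using wf aut_wf_def by blast
  obtain f where bij: "bij_betw f (states A) {0..<card (states A)}"
    using ex_bij_betw_finite_nat[OF fin] by blast
  let ?g = "inv_into (states A) f"
  have inj: "inj_on f (states A)" using bij bij_betw_def by blast
  have gf: "\<And>x. x \<in> states A \<Longrightarrow> ?g (f x) = x" using inj by simp
  have fS: "\<And>x. x \<in> states A \<Longrightarrow> f x \<in> {0..<card (states A)}" using bij bij_betwE by blast
  have gS: "\<And>y. y \<in> {0..<card (states A)} \<Longrightarrow> ?g y \<in> states A"
    using bij by (metis bij_betw_def inv_into_into)
  have fg: "\<And>y. y \<in> {0..<card (states A)} \<Longrightarrow> f (?g y) = y"
    using bij by (metis bij_betw_def f_inv_into_f)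
  have firS: "firing A \<subseteq> states A" using wf aut_wf_def by blast
  have fire_iff: "\<And>x. x \<in> states A \<Longrightarrow> f x \<in> f ` firing A \<longleftrightarrow> x \<in> firing A"
    using inj firS by (meson inj_on_image_mem_iff)
  have fa: "\<And>C t. fires_at k (ren A f) C t \<longleftrightarrow> fires_at k A C t"
    unfolding fires_at_def using ren_run[OF wf bij] run_in_states[OF wf] fire_iff
    by (simp add: ren_def Let_def)
  have wfB: "aut_wf k (ren A f)"
    unfolding aut_wf_def
  proof (intro conjI allI impI ballI)
    show "finite (states (ren A f))" by (simp add: ren_def Let_def)
    show "quiescent (ren A f) \<in> states (ren A f)" using wf fS by (simp add: ren_def Let_def aut_wf_def)
    show "\<And>i. i < ngen (ren A f) \<Longrightarrow> gen (ren A f) i \<in> states (ren A f)"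
      using wf fS by (simp add: ren_def Let_def aut_wf_def)
    show "firing (ren A f) \<subseteq> states (ren A f)" using firS fS by (auto simp add: ren_def Let_def)
    show "quiescent (ren A f) \<notin> firing (ren A f)"
      using wf fire_iff by (simp add: ren_def Let_def aut_wf_def)
    show "\<And>b. length b = 2 * k \<Longrightarrow> tau (ren A f) b < ngen (ren A f)"
      using wf by (simp add: ren_def Let_def aut_wf_def)
  next
    fix s ns assume s: "s \<in> states (ren A f)" and ns: "length ns = 2 * k \<and> set ns \<subseteq> {None} \<union> Some ` states (ren A f)"
    have "?g s \<in> states A" using s gS by (simp add: ren_def Let_def)
    moreover have "set (map (map_option ?g) ns) \<subseteq> {None} \<union> Some ` states A"
      using ns gS by (auto simp add: ren_def Let_def)
    ultimately have "delta A (?g s) (map (map_option ?g) ns) \<in> states A"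
      using wf ns unfolding aut_wf_def by simp
    then show "delta (ren A f) s ns \<in> states (ren A f)" using fS by (simp add: ren_def Let_def)
  next
    fix ns assume ns: "length ns = 2 * k \<and> set ns \<subseteq> {None, Some (quiescent (ren A f))}"
    have qS: "quiescent A \<in> states A" using wf aut_wf_def by blast
    have "set (map (map_option ?g) ns) \<subseteq> {None, Some (quiescent A)}"
      using ns gf[OF qS] by (auto simp add: ren_def Let_def)
    then have "delta A (quiescent A) (map (map_option ?g) ns) = quiescent A"
      using wf ns unfolding aut_wf_def by simp
    then show "delta (ren A f) (quiescent (ren A f)) ns = quiescent (ren A f)"
      using gf[OF qS] by (simp add: ren_def Let_def)
  qed
  have "solution k \<Gamma> (ren A f)" using sol wfB fa unfolding solution_def by (metis)
  moreover have "\<forall>C. ft k C (ren A f) = ft k C A" unfolding ft_def using fa by presburger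
  ultimately show ?thesis by (intro exI[of _ "ren A f"]) (simp add: ren_def Let_def)
qed

definition Dl :: "nat \<Rightarrow> nat set \<Rightarrow> nat option list set" where
  "Dl k S = {ns. length ns = 2*k \<and> set ns \<subseteq> {None} \<union> Some ` S}"

definition key :: "nat \<Rightarrow> fssp_aut \<Rightarrow> _" where
  "key k B = (states B, quiescent B, firing B, restrict (\<lambda>b. gen B (tau B b)) {b. length b = 2*k},
                restrict (\<lambda>(s,ns). delta B s ns) (states B \<times> Dl k (states B)))"

lemma key_run:
  assumes wf: "aut_wf k B" and ke: "key k B = key k B'"
  shows "p \<in> C \<Longrightarrow> run k B C t p = run k B' C t p"
proof (induction t arbitrary: p)
  case 0
  have "restrict (\<lambda>b. gen B (tau B b)) {b. length b = 2*k} (bc k C (origin k)) =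
        restrict (\<lambda>b. gen B' (tau B' b)) {b. length b = 2*k} (bc k C (origin k))"
    using ke unfolding key_def by simp
  moreover have "quiescent B = quiescent B'" using ke unfolding key_def by simp
  ultimately show ?case by simp
next
  case (Suc t)
  let ?ns = "map (\<lambda>i. if vadd p (eps k i) \<in> C then Some (run k B C t (vadd p (eps k i))) else None) [0..<2*k]"
  have ns: "?ns \<in> Dl k (states B)" unfolding Dl_def using run_in_states[OF wf] by auto
  have r: "run k B C t p \<in> states B" using run_in_states[OF wf] Suc.prems by blast
  have se: "states B = states B'" using ke unfolding key_def by simp
  have eq: "restrict (\<lambda>(s,ns). delta B s ns) (states B \<times> Dl k (states B)) =
        restrict (\<lambda>(s,ns). delta B' s ns) (states B' \<times> Dl k (states B'))"
    using ke unfolding key_def prod.inject by blast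
  have "restrict (\<lambda>(s,ns). delta B s ns) (states B \<times> Dl k (states B)) (run k B C t p, ?ns) =
        restrict (\<lambda>(s,ns). delta B' s ns) (states B' \<times> Dl k (states B')) (run k B C t p, ?ns)"
    using eq by (rule fun_cong)
  then have d: "delta B (run k B C t p) ?ns = delta B' (run k B C t p) ?ns" using ns r se by simp
  have n2: "?ns = map (\<lambda>i. if vadd p (eps k i) \<in> C then Some (run k B' C t (vadd p (eps k i))) else None) [0..<2*k]"
    using Suc.IH by auto
  have "run k B C (Suc t) p = delta B (run k B C t p) ?ns" by (simp only: run.simps)
  also have "... = delta B' (run k B C t p) ?ns" by (rule d)
  also have "... = run k B' C (Suc t) p" by (simp only: run.simps n2 Suc.IH[OF Suc.prems])
  finally show ?case .
qed

lemma key_ft: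
  assumes wf: "aut_wf k B" and ke: "key k B = key k B'"
  shows "ft k C B = ft k C B'"
proof -
  have fe: "firing B = firing B'" using ke unfolding key_def by simp
  have "\<And>t. fires_at k B C t = fires_at k B' C t"
    unfolding fires_at_def using key_run[OF assms] fe by simp
  then show ?thesis unfolding ft_def by presburger
qed

lemma finite_keys: "finite (key k ` {B. aut_wf k B \<and> states B \<subseteq> {0..<c}})"
proof (rule finite_subset)
  let ?T = "Pow {0..<c} \<times> {0..<c} \<times> Pow {0..<c} \<times> PiE {b::bool list. length b = 2*k} (\<lambda>_. {0..<c})
            \<times> (\<Union>S\<in>Pow {0..<c}. PiE (S \<times> Dl k S) (\<lambda>_. {0..<c}))"
  have fb: "finite {b::bool list. length b = 2*k}"
    using finite_lists_length_eq[of "UNIV::bool set" "2*k"] by simp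
  have fD: "\<And>S. finite S \<Longrightarrow> finite (Dl k S)" unfolding Dl_def
    subgoal for S
    using finite_lists_length_eq[of "{None} \<union> Some ` S" "2*k"] by (simp add: conj_commute)
    done
  have fU: "finite (\<Union>S\<in>Pow {0..<c}. PiE (S \<times> Dl k S) (\<lambda>_. {0..<c}))"
  proof (rule finite_UN_I)
    show "finite (Pow {0..<c})" by simp
    fix S assume "S \<in> Pow {0..<c}"
    then have "finite S" using finite_subset by blast
    then show "finite (PiE (S \<times> Dl k S) (\<lambda>_. {0..<c}))" using fD by (intro finite_PiE) auto
  qed
  show "finite ?T" using fb fU by (intro finite_cartesian_product finite_PiE) auto
  show "key k ` {B. aut_wf k B \<and> states B \<subseteq> {0..<c}} \<subseteq> ?T"
  proof
    fix x assume "x \<in> key k ` {B. aut_wf k B \<and> states B \<subseteq> {0..<c}}"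
    then obtain B where B: "aut_wf k B" "states B \<subseteq> {0..<c}" and x: "x = key k B" by blast
    have "quiescent B \<in> {0..<c}" using B unfolding aut_wf_def by blast
    moreover have "firing B \<in> Pow {0..<c}" using B unfolding aut_wf_def by blast
    moreover have "restrict (\<lambda>b. gen B (tau B b)) {b. length b = 2*k} \<in> PiE {b::bool list. length b = 2*k} (\<lambda>_. {0..<c})"
      unfolding restrict_PiE_iff using B unfolding aut_wf_def by blast
    moreover have "restrict (\<lambda>(s,ns). delta B s ns) (states B \<times> Dl k (states B)) \<in> PiE (states B \<times> Dl k (states B)) (\<lambda>_. {0..<c})"
      unfolding restrict_PiE_iff
    proof
      fix z assume z: "z \<in> states B \<times> Dl k (states B)"
      obtain s ns where zz: "z = (s, ns)" by fastforce
      have "delta B s ns \<in> states B" using z B(1) unfolding zz Dl_def aut_wf_def by blast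
      then show "(case z of (s, ns) \<Rightarrow> delta B s ns) \<in> {0..<c}" using B(2) zz by auto
    qed
    ultimately show "x \<in> ?T" unfolding x key_def using B(2) by blast
  qed
qed

definition enc :: "nat list \<times> bool \<Rightarrow> nat" where "enc = to_nat"
definition dec :: "nat \<Rightarrow> nat list \<times> bool" where "dec = from_nat"

lemma dec_enc[simp]: "dec (enc x) = x" by (simp add: enc_def dec_def)
lemma enc_inj[simp]: "enc x = enc y \<longleftrightarrow> x = y" by (simp add: enc_def)

definition pvalid :: "fssp_aut list \<Rightarrow> nat list \<Rightarrow> bool" where
  "pvalid Bs xs \<longleftrightarrow> length xs = length Bs \<and> (\<forall>i<length Bs. xs!i \<in> states (Bs!i))"

definition pdelta :: "fssp_aut list \<Rightarrow> nat \<Rightarrow> nat option list \<Rightarrow> nat" where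
  "pdelta Bs s ns = (let xs = fst (dec s); fl = snd (dec s);
      nss = map (map_option (\<lambda>y. fst (dec y))) ns in
      enc (map (\<lambda>i. delta (Bs!i) (xs!i) (map (map_option (\<lambda>ys. ys!i)) nss)) [0..<length Bs],
           fl \<or> (\<exists>i<length Bs. xs!i \<in> firing (Bs!i))))"

definition pgen :: "nat \<Rightarrow> fssp_aut list \<Rightarrow> nat \<Rightarrow> nat" where
  "pgen k Bs i = (let b = (from_nat i :: bool list) in
     if length b = 2*k then enc (map (\<lambda>B. gen B (tau B b)) Bs, False) else enc (map quiescent Bs, False))"

definition prod_aut :: "nat \<Rightarrow> fssp_aut list \<Rightarrow> fssp_aut" where
  "prod_aut k Bs = \<lparr>states = enc ` ({xs. pvalid Bs xs} \<times> UNIV), quiescent = enc (map quiescent Bs, False),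
     ngen = Suc (Max (to_nat ` {b::bool list. length b = 2*k})), gen = pgen k Bs,
     firing = enc ` {(xs, False) | xs. pvalid Bs xs \<and> (\<exists>i<length Bs. xs!i \<in> firing (Bs!i))},
     tau = (\<lambda>b. to_nat b), delta = pdelta Bs\<rparr>"

lemma map_idx: "map (\<lambda>i. g (xs!i)) [0..<length xs] = map g xs"
  by (rule nth_equalityI) simp_all

lemma prod_run:
  "p \<in> C \<Longrightarrow> run k (prod_aut k Bs) C t p =
     enc (map (\<lambda>B. run k B C t p) Bs, \<exists>t'<t. \<exists>i<length Bs. run k (Bs!i) C t' p \<in> firing (Bs!i))"
proof (induction t arbitrary: p)
  case 0
  then show ?case by (simp add: prod_aut_def pgen_def)
next
  case (Suc t)
  let ?P = "prod_aut k Bs"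
  let ?ns = "map (\<lambda>j. if vadd p (eps k j) \<in> C then Some (run k ?P C t (vadd p (eps k j))) else None) [0..<2*k]"
  have nss: "map (map_option (\<lambda>y. fst (dec y))) ?ns =
     map (\<lambda>j. if vadd p (eps k j) \<in> C then Some (map (\<lambda>B. run k B C t (vadd p (eps k j))) Bs) else None) [0..<2*k]"
    using Suc.IH by auto
  have comp: "\<And>i. i < length Bs \<Longrightarrow> map (map_option (\<lambda>ys. ys!i))
     (map (\<lambda>j. if vadd p (eps k j) \<in> C then Some (map (\<lambda>B. run k B C t (vadd p (eps k j))) Bs) else None) [0..<2*k])
     = map (\<lambda>j. if vadd p (eps k j) \<in> C then Some (run k (Bs!i) C t (vadd p (eps k j))) else None) [0..<2*k]"
    by auto
  have dP: "delta ?P = pdelta Bs" by (simp add: prod_aut_def)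
  have "run k ?P C (Suc t) p = pdelta Bs (run k ?P C t p) ?ns" by (simp only: run.simps dP)
  also have "... = enc (map (\<lambda>i. run k (Bs!i) C (Suc t) p) [0..<length Bs],
      (\<exists>t'<t. \<exists>i<length Bs. run k (Bs!i) C t' p \<in> firing (Bs!i)) \<or> (\<exists>i<length Bs. run k (Bs!i) C t p \<in> firing (Bs!i)))"
    unfolding pdelta_def Let_def Suc.IH[OF Suc.prems] dec_enc fst_conv snd_conv nss
    using comp by (simp del: map_map cong: map_cong conj_cong)
  also have "map (\<lambda>i. run k (Bs!i) C (Suc t) p) [0..<length Bs] = map (\<lambda>B. run k B C (Suc t) p) Bs"
    by (rule map_idx)
  also have "((\<exists>t'<t. \<exists>i<length Bs. run k (Bs!i) C t' p \<in> firing (Bs!i)) \<or> (\<exists>i<length Bs. run k (Bs!i) C t p \<in> firing (Bs!i)))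
     = (\<exists>t'<Suc t. \<exists>i<length Bs. run k (Bs!i) C t' p \<in> firing (Bs!i))"
    using less_Suc_eq by auto
  finally show ?case .
qed

lemma finite_bool_lists: "finite {b::bool list. length b = n}"
  using finite_lists_length_eq[of "UNIV::bool set" n] by simp

lemma prod_wf:
  assumes wf: "\<forall>B\<in>set Bs. aut_wf k B"
  shows "aut_wf k (prod_aut k Bs)"
  unfolding aut_wf_def
proof (intro conjI allI impI ballI)
  let ?P = "prod_aut k Bs"
  have wfi: "\<And>i. i < length Bs \<Longrightarrow> aut_wf k (Bs!i)" using wf by simp
  have "{xs. pvalid Bs xs} \<subseteq> {xs. set xs \<subseteq> (\<Union>B\<in>set Bs. states B) \<and> length xs = length Bs}"
    unfolding pvalid_def by (auto simp: in_set_conv_nth) (metis nth_mem)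
  moreover have "finite (\<Union>B\<in>set Bs. states B)" using wf unfolding aut_wf_def by auto
  ultimately have "finite {xs. pvalid Bs xs}" using finite_lists_length_eq finite_subset by metis
  then show "finite (states ?P)" by (simp add: prod_aut_def)
  have qv: "pvalid Bs (map quiescent Bs)" unfolding pvalid_def using wfi aut_wf_def by auto
  then show "quiescent ?P \<in> states ?P" by (simp add: prod_aut_def)
  show "\<And>i. i < ngen ?P \<Longrightarrow> gen ?P i \<in> states ?P"
  proof -
    fix i
    show "gen ?P i \<in> states ?P"
    proof (cases "length (from_nat i :: bool list) = 2*k")
      case True
      have "pvalid Bs (map (\<lambda>B. gen B (tau B (from_nat i))) Bs)"
        unfolding pvalid_def using wfi True unfolding aut_wf_def by auto
      then show ?thesis using True by (simp add: prod_aut_def pgen_def)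
    next
      case False
      then show ?thesis using qv by (simp add: prod_aut_def pgen_def)
    qed
  qed
  show "firing ?P \<subseteq> states ?P" by (auto simp add: prod_aut_def)
  show "quiescent ?P \<notin> firing ?P"
    using wfi unfolding aut_wf_def by (auto simp add: prod_aut_def)
  show "\<And>b. length b = 2 * k \<Longrightarrow> tau ?P b < ngen ?P"
  proof -
    fix b :: "bool list" assume "length b = 2*k"
    then have "to_nat b \<le> Max (to_nat ` {b::bool list. length b = 2*k})"
      using finite_bool_lists by (intro Max_ge) auto
    then show "tau ?P b < ngen ?P" by (simp add: prod_aut_def)
  qed
next
  let ?P = "prod_aut k Bs"
  have wfi: "\<And>i. i < length Bs \<Longrightarrow> aut_wf k (Bs!i)" using wf by simp
  fix s ns assume s: "s \<in> states ?P" and ns: "length ns = 2 * k \<and> set ns \<subseteq> {None} \<union> Some ` states ?P"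
  obtain xs fl where sx: "s = enc (xs, fl)" and xv: "pvalid Bs xs" using s by (auto simp: prod_aut_def)
  let ?nss = "map (map_option (\<lambda>y. fst (dec y))) ns"
  have nssv: "\<And>zs. Some zs \<in> set ?nss \<Longrightarrow> pvalid Bs zs"
    using ns by (auto simp: prod_aut_def)
  have "pvalid Bs (map (\<lambda>i. delta (Bs!i) (xs!i) (map (map_option (\<lambda>ys. ys!i)) ?nss)) [0..<length Bs])"
    unfolding pvalid_def
  proof (intro conjI allI impI)
    fix i assume i: "i < length Bs"
    have "xs!i \<in> states (Bs!i)" using xv i pvalid_def by blast
    moreover have "length (map (map_option (\<lambda>ys. ys!i)) ?nss) = 2*k" using ns by simp
    moreover have "set (map (map_option (\<lambda>ys. ys!i)) ?nss) \<subseteq> {None} \<union> Some ` states (Bs!i)"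
    proof
      fix z assume "z \<in> set (map (map_option (\<lambda>ys. ys!i)) ?nss)"
      then obtain w where w: "w \<in> set ?nss" "z = map_option (\<lambda>ys. ys!i) w" by auto
      show "z \<in> {None} \<union> Some ` states (Bs!i)"
      proof (cases w)
        case None then show ?thesis using w by simp
      next
        case (Some zs)
        then have "pvalid Bs zs" using nssv w by simp
        then show ?thesis using w Some i pvalid_def by auto
      qed
    qed
    ultimately show "map (\<lambda>i. delta (Bs!i) (xs!i) (map (map_option (\<lambda>ys. ys!i)) ?nss)) [0..<length Bs] ! i \<in> states (Bs!i)"
      using wfi[OF i] i unfolding aut_wf_def by simp
  qed simp
  then show "delta ?P s ns \<in> states ?P"
    by (simp add: prod_aut_def pdelta_def sx Let_def)
next
  let ?P = "prod_aut k Bs"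
  have wfi: "\<And>i. i < length Bs \<Longrightarrow> aut_wf k (Bs!i)" using wf by simp
  fix ns assume ns: "length ns = 2 * k \<and> set ns \<subseteq> {None, Some (quiescent ?P)}"
  let ?nss = "map (map_option (\<lambda>y. fst (dec y))) ns"
  have nq: "set ?nss \<subseteq> {None, Some (map quiescent Bs)}" using ns by (auto simp: prod_aut_def)
  have "map (\<lambda>i. delta (Bs!i) (map quiescent Bs!i) (map (map_option (\<lambda>ys. ys!i)) ?nss)) [0..<length Bs]
        = map quiescent Bs"
  proof (rule nth_equalityI)
    fix i assume "i < length (map (\<lambda>i. delta (Bs!i) (map quiescent Bs!i) (map (map_option (\<lambda>ys. ys!i)) ?nss)) [0..<length Bs])"
    then have i: "i < length Bs" by simp
    have "set (map (map_option (\<lambda>ys. ys!i)) ?nss) \<subseteq> {None, Some (quiescent (Bs!i))}"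
      using nq i by auto
    then have "delta (Bs!i) (quiescent (Bs!i)) (map (map_option (\<lambda>ys. ys!i)) ?nss) = quiescent (Bs!i)"
      using wfi[OF i] ns unfolding aut_wf_def by simp
    then show "map (\<lambda>i. delta (Bs!i) (map quiescent Bs!i) (map (map_option (\<lambda>ys. ys!i)) ?nss)) [0..<length Bs] ! i = map quiescent Bs ! i"
      using i by simp
  qed simp
  moreover have "\<not> (\<exists>i<length Bs. map quiescent Bs ! i \<in> firing (Bs!i))"
    using wfi unfolding aut_wf_def by auto
  ultimately show "delta ?P (quiescent ?P) ns = quiescent ?P"
    by (simp add: prod_aut_def pdelta_def Let_def)
qed

lemma prod_firing_iff:
  "enc (xs, fl) \<in> firing (prod_aut k Bs) \<longleftrightarrow> \<not> fl \<and> pvalid Bs xs \<and> (\<exists>i<length Bs. xs!i \<in> firing (Bs!i))"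
  by (auto simp add: prod_aut_def)

lemma prod_fires:
  assumes sol: "\<forall>B\<in>set Bs. solution k \<Gamma> B" and C: "C \<in> \<Gamma>"
    and B0: "B0 \<in> set Bs" and mn: "\<forall>B\<in>set Bs. ft k C B0 \<le> ft k C B"
  shows "fires_at k (prod_aut k Bs) C (ft k C B0)"
proof -
  let ?m = "ft k C B0"
  obtain i0 where i0: "i0 < length Bs" "Bs!i0 = B0" using B0 by (meson in_set_conv_nth)
  have early: "\<And>i t' p. i < length Bs \<Longrightarrow> t' < ?m \<Longrightarrow> p \<in> C \<Longrightarrow> run k (Bs!i) C t' p \<notin> firing (Bs!i)"
  proof -
    fix i t' p assume i: "i < length Bs" and t': "t' < ?m" and p: "p \<in> C"
    have "Bs!i \<in> set Bs" using i by simp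
    then have "fires_at k (Bs!i) C (ft k C (Bs!i))" "?m \<le> ft k C (Bs!i)"
      using sol C mn solution_fires by auto
    then show "run k (Bs!i) C t' p \<notin> firing (Bs!i)" using t' p unfolding fires_at_def by auto
  qed
  have f0: "fires_at k B0 C ?m" using sol B0 C solution_fires by blast
  have wfi: "\<And>i. i < length Bs \<Longrightarrow> aut_wf k (Bs!i)" using sol solution_def by auto
  have pv: "\<And>t p. p \<in> C \<Longrightarrow> pvalid Bs (map (\<lambda>B. run k B C t p) Bs)"
    unfolding pvalid_def using run_in_states wfi by auto
  show ?thesis unfolding fires_at_def
  proof (intro conjI ballI allI impI)
    fix p assume p: "p \<in> C"
    have "run k B0 C ?m p \<in> firing B0" using f0 p fires_at_def by blast
    then have "\<exists>i<length Bs. map (\<lambda>B. run k B C ?m p) Bs ! i \<in> firing (Bs!i)"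
      using i0 by auto
    moreover have "\<not> (\<exists>t'<?m. \<exists>i<length Bs. run k (Bs!i) C t' p \<in> firing (Bs!i))"
      using early p by blast
    ultimately show "run k (prod_aut k Bs) C ?m p \<in> firing (prod_aut k Bs)"
      unfolding prod_run[OF p] prod_firing_iff using pv[OF p] by blast
  next
    fix t' p assume t': "t' < ?m" and p: "p \<in> C"
    have "\<not> (\<exists>i<length Bs. map (\<lambda>B. run k B C t' p) Bs ! i \<in> firing (Bs!i))"
      using early t' p by auto
    then show "run k (prod_aut k Bs) C t' p \<notin> firing (prod_aut k Bs)"
      unfolding prod_run[OF p] prod_firing_iff by blast
  qed
qed

theorem theorem18:
  fixes k :: nat and \<Gamma> :: "int list set set"
  assumes "k \<ge> 1"
    and "variation k \<Gamma>"
    and "\<exists>A. solution k \<Gamma> A"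
  shows "(\<exists>A. minimal_time_solution k \<Gamma> A) \<longleftrightarrow> (\<exists>c::nat. \<forall>C\<in>\<Gamma>. mss k \<Gamma> C \<le> c)"
proof
  assume "\<exists>A. minimal_time_solution k \<Gamma> A"
  then obtain A where A: "minimal_time_solution k \<Gamma> A" by blast
  have "\<forall>C\<in>\<Gamma>. mss k \<Gamma> C \<le> card (states A)"
  proof
    fix C assume "C \<in> \<Gamma>"
    then have "\<exists>A'. solution k \<Gamma> A' \<and> ft k C A' = mft k \<Gamma> C \<and> card (states A') = card (states A)"
      using A minimal_time_solution_def by blast
    then show "mss k \<Gamma> C \<le> card (states A)" unfolding mss_def by (rule Least_le)
  qed
  then show "\<exists>c::nat. \<forall>C\<in>\<Gamma>. mss k \<Gamma> C \<le> c" by blast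
next
  assume "\<exists>c::nat. \<forall>C\<in>\<Gamma>. mss k \<Gamma> C \<le> c"
  then obtain c where c: "\<forall>C\<in>\<Gamma>. mss k \<Gamma> C \<le> c" by blast
  define R where "R = {B. solution k \<Gamma> B \<and> states B \<subseteq> {0..<c}}"
  have "key k ` R \<subseteq> key k ` {B. aut_wf k B \<and> states B \<subseteq> {0..<c}}"
    unfolding R_def solution_def by auto
  then have fK: "finite (key k ` R)" by (rule finite_subset[OF _ finite_keys])
  define rep where "rep = (\<lambda>\<kappa>. SOME B. B \<in> R \<and> key k B = \<kappa>)"
  have repR: "\<And>B. B \<in> R \<Longrightarrow> rep (key k B) \<in> R \<and> key k (rep (key k B)) = key k B"
    unfolding rep_def by (rule someI_ex) blast
  define F where "F = rep ` (key k ` R)"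
  have "finite F" unfolding F_def using fK by simp
  then obtain Bs where Bs: "set Bs = F" using finite_list by blast
  have FR: "F \<subseteq> R" unfolding F_def using repR by auto
  have solBs: "\<forall>B\<in>set Bs. solution k \<Gamma> B" using Bs FR R_def by auto
  have mftle: "\<And>C B. solution k \<Gamma> B \<Longrightarrow> mft k \<Gamma> C \<le> ft k C B"
  proof -
    fix C B assume "solution k \<Gamma> B"
    then have "\<exists>A. solution k \<Gamma> A \<and> ft k C A = ft k C B" by blast
    then show "mft k \<Gamma> C \<le> ft k C B" unfolding mft_def by (rule Least_le)
  qed
  have good: "\<exists>B\<in>set Bs. ft k C B = mft k \<Gamma> C" if C: "C \<in> \<Gamma>" for C
  proof -
    obtain A0 where "solution k \<Gamma> A0" using assms(3) by blast
    then have "\<exists>t. \<exists>A. solution k \<Gamma> A \<and> ft k C A = t" by blast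
    then have "\<exists>A. solution k \<Gamma> A \<and> ft k C A = mft k \<Gamma> C"
      unfolding mft_def by (rule LeastI_ex)
    then have "\<exists>n A. solution k \<Gamma> A \<and> ft k C A = mft k \<Gamma> C \<and> card (states A) = n" by blast
    then have "\<exists>A. solution k \<Gamma> A \<and> ft k C A = mft k \<Gamma> C \<and> card (states A) = mss k \<Gamma> C"
      unfolding mss_def by (rule LeastI_ex)
    then obtain A where A: "solution k \<Gamma> A" "ft k C A = mft k \<Gamma> C" "card (states A) = mss k \<Gamma> C"
      by blast
    obtain B where B: "solution k \<Gamma> B" "states B = {0..<card (states A)}" "\<forall>C. ft k C B = ft k C A"
      using ren_props[OF A(1)] by blast
    have "B \<in> R" unfolding R_def using B A(3) c C by auto
    then have B': "rep (key k B) \<in> R" "key k (rep (key k B)) = key k B" using repR by auto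
    have "aut_wf k (rep (key k B))" using B'(1) unfolding R_def solution_def by blast
    then have "ft k C (rep (key k B)) = ft k C B" using key_ft B'(2) by blast
    moreover have "rep (key k B) \<in> set Bs" using Bs F_def \<open>B \<in> R\<close> by blast
    ultimately show ?thesis using A B by auto
  qed
  have ne: "\<And>C. C \<in> \<Gamma> \<Longrightarrow> C \<noteq> {}" using assms(2) unfolding variation_def by blast
  have fP: "fires_at k (prod_aut k Bs) C (mft k \<Gamma> C)" if C: "C \<in> \<Gamma>" for C
  proof -
    obtain B0 where B0: "B0 \<in> set Bs" "ft k C B0 = mft k \<Gamma> C" using good[OF C] by blast
    have "\<forall>B\<in>set Bs. ft k C B0 \<le> ft k C B" using B0 mftle solBs by auto
    then show ?thesis using prod_fires[OF solBs C B0(1)] B0(2) by simp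
  qed
  have "aut_wf k (prod_aut k Bs)" using prod_wf solBs solution_def by blast
  then have "solution k \<Gamma> (prod_aut k Bs)" unfolding solution_def using fP by (intro conjI ballI exI)
  moreover have "\<forall>C\<in>\<Gamma>. ft k C (prod_aut k Bs) = mft k \<Gamma> C"
  proof
    fix C assume "C \<in> \<Gamma>"
    then show "ft k C (prod_aut k Bs) = mft k \<Gamma> C" by (intro fires_at_ft ne fP)
  qed
  ultimately show "\<exists>A. minimal_time_solution k \<Gamma> A" unfolding minimal_time_solution_def by blast
qed

end
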